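(* Let $\mathbf x=(x_1,\dots,x_n)\in\mathbb R_{\ge0}^n$, let $B\ge1$ be an integer, and let $\mathbf a=\mathrm{RAS}(\mathbf x;B)$. Then for all $i,j\in[n]$, $$a_jx_j\le(a_i+1)x_i.$$
   Context: $\odot$ is the entrywise product and $\mathbf e_i$ the $i$-th unit vector. RAS$(x_1,\dots,x_n;B)$: relabel indices so that $x_1\le\dots\le x_n$ (the output is returned in the original labeling). If $B=1$ return $\mathbf e_1$. Otherwise let $\mathbf a=\mathrm{RAS}(\mathbf x;B-1)$; let $r=\min\{i:a_i=0\}$ if $a_n=0$, else $r=n$; let $M=\arg\min_{i\in[r]}\|(\mathbf a+\mathbf e_i)\odot\mathbf x\|_\infty$; choose $j\in M$ minimizing the cardinality of $\arg\max_{i\in[r]}(a_i+e_{j,i})x_i$; return $\mathbf a+\mathbf e_j$. *)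

theory Defs
  imports Main "HOL.Real"
begin

text \<open>Vectors in R^n / N^n are functions on indices 0..n-1 (index k corresponds to the
paper's index k+1); entries outside 0..n-1 are irrelevant for inputs and 0 for outputs.\<close>

definition unitv :: "nat \<Rightarrow> nat \<Rightarrow> nat" where
  "unitv j = (\<lambda>i. if i = j then 1 else 0)"

definition supnorm :: "nat \<Rightarrow> (nat \<Rightarrow> real) \<Rightarrow> real" where
  "supnorm n v = Max ((\<lambda>m. \<bar>v m\<bar>) ` {0..<n})"

text \<open>One step of RAS on already sorted data y (y_0 \<le> ... \<le> y_(n-1)).\<close>

definition ras_range :: "nat \<Rightarrow> (nat \<Rightarrow> nat) \<Rightarrow> nat set" where
  "ras_range n a = (if a (n - 1) = 0 then {0..(LEAST i. a i = 0)} else {0..<n})"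

definition ras_M :: "nat \<Rightarrow> (nat \<Rightarrow> real) \<Rightarrow> (nat \<Rightarrow> nat) \<Rightarrow> nat set" where
  "ras_M n y a = {i \<in> ras_range n a. \<forall>k \<in> ras_range n a.
      supnorm n (\<lambda>m. real (a m + unitv i m) * y m) \<le> supnorm n (\<lambda>m. real (a m + unitv k m) * y m)}"

definition ras_argmax :: "nat \<Rightarrow> (nat \<Rightarrow> real) \<Rightarrow> (nat \<Rightarrow> nat) \<Rightarrow> nat \<Rightarrow> nat set" where
  "ras_argmax n y a j = {i \<in> ras_range n a. \<forall>k \<in> ras_range n a.
      real (a k + unitv j k) * y k \<le> real (a i + unitv j i) * y i}"

text \<open>All possible runs (any tie-breaking) of RAS on sorted input.\<close>
inductive ras_sorted :: "nat \<Rightarrow> (nat \<Rightarrow> real) \<Rightarrow> nat \<Rightarrow> (nat \<Rightarrow> nat) \<Rightarrow> bool"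
  for n :: nat and y :: "nat \<Rightarrow> real" where
  base: "ras_sorted n y 1 (unitv 0)"
| step: "\<lbrakk> ras_sorted n y B a; j \<in> ras_M n y a;
          \<forall>j' \<in> ras_M n y a. card (ras_argmax n y a j) \<le> card (ras_argmax n y a j') \<rbrakk>
        \<Longrightarrow> ras_sorted n y (Suc B) (\<lambda>i. a i + unitv j i)"

text \<open>RAS with relabeling: a sorting permutation \<sigma> of {0..<n} (any one, ties arbitrary),
run on x \<circ> \<sigma>, and translate back to the original labeling.\<close>
definition ras :: "nat \<Rightarrow> (nat \<Rightarrow> real) \<Rightarrow> nat \<Rightarrow> (nat \<Rightarrow> nat) \<Rightarrow> bool" where
  "ras n x B a \<longleftrightarrow> (\<exists>\<sigma> b. bij_betw \<sigma> {0..<n} {0..<n}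
      \<and> (\<forall>i j. i \<le> j \<and> j < n \<longrightarrow> x (\<sigma> i) \<le> x (\<sigma> j))
      \<and> ras_sorted n (x \<circ> \<sigma>) B b
      \<and> (\<forall>i < n. a (\<sigma> i) = b i) \<and> (\<forall>i \<ge> n. a i = 0))"

end

theory Submission
  imports Defs
begin

lemma range_sub:
  assumes "n \<ge> 1"
  shows "ras_range n a \<subseteq> {0..<n}"
proof (cases "a (n - 1) = 0")
  case True
  then have "(LEAST i. a i = 0) \<le> n - 1" by (rule Least_le)
  then show ?thesis using True assms unfolding ras_range_def by auto
next
  case False
  then show ?thesis unfolding ras_range_def by auto
qed

lemma supnorm_eq:
  assumes inv: "\<forall>p<n. \<forall>q<n. real (a q) * y q \<le> (real (a p) + 1) * y p"
    and nn: "\<forall>i<n. y i \<ge> 0" and i: "i < n"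
  shows "supnorm n (\<lambda>m. real (a m + unitv i m) * y m) = (real (a i) + 1) * y i"
  unfolding supnorm_def
proof (rule Max_eqI)
  show "finite ((\<lambda>m. \<bar>real (a m + unitv i m) * y m\<bar>) ` {0..<n})" by simp
next
  fix z assume "z \<in> (\<lambda>m. \<bar>real (a m + unitv i m) * y m\<bar>) ` {0..<n}"
  then obtain m where m: "m < n" "z = \<bar>real (a m + unitv i m) * y m\<bar>" by auto
  have "y m \<ge> 0" using nn m by auto
  then have z: "z = real (a m + unitv i m) * y m" using m by simp
  show "z \<le> (real (a i) + 1) * y i"
  proof (cases "m = i")
    case True then show ?thesis using z by (simp add: unitv_def algebra_simps)
  next
    case False then show ?thesis using z inv m i by (simp add: unitv_def)
  qed
next
  have "y i \<ge> 0" using nn i by auto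
  then have "(real (a i) + 1) * y i = \<bar>real (a i + unitv i i) * y i\<bar>"
    by (simp add: unitv_def)
  then show "(real (a i) + 1) * y i \<in> (\<lambda>m. \<bar>real (a m + unitv i m) * y m\<bar>) ` {0..<n}"
    using i by auto
qed

lemma inv_sorted:
  assumes "ras_sorted n y B b" and n: "n \<ge> 1"
    and srt: "\<forall>i j. i \<le> j \<and> j < n \<longrightarrow> y i \<le> y j"
    and nn: "\<forall>i<n. y i \<ge> 0"
  shows "\<forall>p<n. \<forall>q<n. real (b q) * y q \<le> (real (b p) + 1) * y p"
  using assms(1)
proof (induction rule: ras_sorted.induct)
  case base
  show ?case
  proof (intro allI impI)
    fix p q assume p: "p < n" and q: "q < n"
    show "real (unitv 0 q) * y q \<le> (real (unitv 0 p) + 1) * y p"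
    proof (cases "q = 0")
      case True
      have "y 0 \<le> y p" using srt p by auto
      moreover have "0 \<le> y p" using nn p by auto
      ultimately show ?thesis using True
        by (auto simp: unitv_def)
    next
      case False
      have "0 \<le> y p" using nn p by auto
      then show ?thesis using False by (simp add: unitv_def)
    qed
  qed
next
  case (step B a j)
  note IH = step.IH
  let ?R = "ras_range n a"
  have Rsub: "?R \<subseteq> {0..<n}" using range_sub[OF n] .
  have jR: "j \<in> ?R" using step.hyps(2) unfolding ras_M_def by auto
  hence jn: "j < n" using Rsub by auto
  have key: "(real (a j) + 1) * y j \<le> (real (a i) + 1) * y i" if i: "i < n" for i
  proof (cases "i \<in> ?R")
    case True
    have "supnorm n (\<lambda>m. real (a m + unitv j m) * y m) \<le> supnorm n (\<lambda>m. real (a m + unitv i m) * y m)"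
      using step.hyps(2) True unfolding ras_M_def by auto
    then show ?thesis using supnorm_eq[OF IH nn] i jn by simp
  next
    case False
    then have a0: "a (n - 1) = 0" and iR: "i \<notin> {0..(LEAST i. a i = 0)}"
      using i unfolding ras_range_def by (auto split: if_splits)
    define k where "k = (LEAST i. a i = 0)"
    have ak: "a k = 0" unfolding k_def using a0 by (rule LeastI)
    have kR: "k \<in> ?R" using a0 unfolding ras_range_def k_def by simp
    have kn: "k < n" using kR Rsub by auto
    have ik: "k \<le> i" using iR k_def by auto
    have "supnorm n (\<lambda>m. real (a m + unitv j m) * y m) \<le> supnorm n (\<lambda>m. real (a m + unitv k m) * y m)"
      using step.hyps(2) kR unfolding ras_M_def by auto
    then have "(real (a j) + 1) * y j \<le> (real (a k) + 1) * y k"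
      using supnorm_eq[OF IH nn] kn jn by simp
    also have "\<dots> = y k" using ak by simp
    also have "\<dots> \<le> y i" using srt ik i by auto
    also have "\<dots> \<le> (real (a i) + 1) * y i" using nn i by (simp add: algebra_simps)
    finally show ?thesis .
  qed
  show ?case
  proof (intro allI impI)
    fix p q assume p: "p < n" and q: "q < n"
    have yp: "y p \<ge> 0" using nn p by auto
    have h1: "real (a q) * y q \<le> (real (a p) + 1) * y p" using IH p q by auto
    have h2: "(real (a p) + 1) * y p \<le> (real (a p + unitv j p) + 1) * y p"
      using yp by (intro mult_right_mono) (auto simp: unitv_def)
    show "real (a q + unitv j q) * y q \<le> (real (a p + unitv j p) + 1) * y p"
    proof (cases "q = j")
      case True
      show ?thesis
      proof (cases "p = j")
        case True
        then show ?thesis using \<open>q = j\<close> yp by (simp add: unitv_def algebra_simps)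
      next
        case False
        then show ?thesis using \<open>q = j\<close> key[OF p] by (simp add: unitv_def add.commute)
      qed
    next
      case False
      then show ?thesis using h1 h2 by (simp add: unitv_def)
    qed
  qed
qed

theorem lemmaD1:
  fixes n B :: nat and x :: "nat \<Rightarrow> real" and a :: "nat \<Rightarrow> nat"
  assumes "n \<ge> 1"
    and "\<forall>i < n. x i \<ge> 0"
    and "B \<ge> 1"
    and "ras n x B a"
    and "i < n" and "j < n"
  shows "real (a j) * x j \<le> (real (a i) + 1) * x i"
proof -
  obtain \<sigma> b where bij: "bij_betw \<sigma> {0..<n} {0..<n}"
    and srt: "\<forall>i j. i \<le> j \<and> j < n \<longrightarrow> x (\<sigma> i) \<le> x (\<sigma> j)"
    and rs: "ras_sorted n (x \<circ> \<sigma>) B b"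
    and ab: "\<forall>i < n. a (\<sigma> i) = b i"
    using assms(4) unfolding ras_def by blast
  have nn: "\<forall>i<n. (x \<circ> \<sigma>) i \<ge> 0"
    using assms(2) bij by (auto dest: bij_betw_apply)
  have inv: "\<forall>p<n. \<forall>q<n. real (b q) * (x \<circ> \<sigma>) q \<le> (real (b p) + 1) * (x \<circ> \<sigma>) p"
    using inv_sorted[OF rs assms(1) _ nn] srt by simp
  obtain p where p: "p < n" "\<sigma> p = i" using bij assms(5)
    by (metis atLeastLessThan_iff bij_betw_iff_bijections zero_le)
  obtain q where q: "q < n" "\<sigma> q = j" using bij assms(6)
    by (metis atLeastLessThan_iff bij_betw_iff_bijections zero_le)
  show ?thesis using inv p q ab by auto
qed

end
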